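(* Let $p$ be a prime, let $1\le m_1\le\cdots\le m_n$ be integers and $G=\mathbb{Z}_{p^{m_1}}\times\cdots\times\mathbb{Z}_{p^{m_n}}$, with $g_i$ a fixed generator of the $i$-th factor, so every element of $G$ is written $g_1^{s_1}\cdots g_n^{s_n}$ with $s_i\in\mathbb{Z}$. Let $A$ be a finite abelian $p$-group (written additively). Let $\Lambda=\{(i,j)\colon 1\le i<j\le n\}$, and for $\lambda=(i,j)\in\Lambda$ write $\dot\lambda=i$, $\ddot\lambda=j$. For $\mathbf{a}=(a_1,\ldots,a_n)\in A^n$ and $\mathbf{b}=(b_\lambda)_{\lambda\in\Lambda}\in A^\Lambda$ with $p^{m_{\dot\lambda}}b_\lambda=0$ for all $\lambda$, define $\alpha_{\mathbf{a},\mathbf{b}}\colon G\times G\to A$ by $$\alpha_{\mathbf{a},\mathbf{b}}(g_1^{s_1}\cdots g_n^{s_n},g_1^{t_1}\cdots g_n^{t_n})=\sum_{i=1}^n\Big[\frac{\langle s_i\rangle_{p^{m_i}}+\langle t_i\rangle_{p^{m_i}}}{p^{m_i}}\Big]a_i-\sum_{\lambda\in\Lambda}t_{\dot\lambda}s_{\ddot\lambda}b_\lambda .$$ Then each such $\alpha_{\mathbf{a},\mathbf{b}}$ is a $2$-cocycle, and every element of $H^2(G;A)$ is represented by $\alpha_{\mathbf{a},\mathbf{b}}$ for some $\mathbf{a}\in A^n$ and some $\mathbf{b}$ with $b_\lambda\in\ker(p^{m_{\dot\lambda}})$ for all $\lambda\in\Lambda$. For such $\mathbf{a},\mathbf{b}$,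 $[\alpha_{\mathbf{a},\mathbf{b}}]=0$ in $H^2(G;A)$ if and only if $a_i\in p^{m_i}A$ for all $i\in\{1,\ldots,n\}$ and $b_\lambda=0$ for all $\lambda\in\Lambda$. Consequently $[\alpha_{\mathbf{a},\mathbf{b}}]\mapsto\big((a_i+p^{m_i}A)_{i},(b_\lambda)_{\lambda}\big)$ gives an isomorphism $$H^2(G;A)\cong\prod_{i=1}^n A/p^{m_i}A\times\prod_{\lambda\in\Lambda}\ker\big(A\xrightarrow{\,p^{m_{\dot\lambda}}\,}A\big).$$
   Context: $[x]$ denotes the largest integer not exceeding $x$; for integers $q>0$ and $i$, $\langle i\rangle_q\in\{0,\ldots,q-1\}$ is the remainder of $i$ modulo $q$. $\ker(p^k)$ denotes the kernel of the endomorphism $a\mapsto p^ka$ of $A$. *)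

theory Defs
  imports "HOL-Computational_Algebra.Primes"
begin

primrec natmul :: "nat \<Rightarrow> 'a::monoid_add \<Rightarrow> 'a" where
  "natmul 0 a = 0"
| "natmul (Suc k) a = a + natmul k a"

text \<open>G = Z_{p^m_0} x ... x Z_{p^m_(n-1)}; the element g_0^{s_0}...g_(n-1)^{s_(n-1)}
  is encoded by its exponent vector s, with 0 <= s i < p^(m i) for i < n and s i = 0 else.\<close>
definition grp :: "nat \<Rightarrow> (nat \<Rightarrow> nat) \<Rightarrow> nat \<Rightarrow> (nat \<Rightarrow> nat) set" where
  "grp n m p = {s. (\<forall>i<n. s i < p ^ m i) \<and> (\<forall>i\<ge>n. s i = 0)}"

definition gmul :: "nat \<Rightarrow> (nat \<Rightarrow> nat) \<Rightarrow> nat \<Rightarrow> (nat \<Rightarrow> nat) \<Rightarrow> (nat \<Rightarrow> nat) \<Rightarrow> (nat \<Rightarrow> nat)" where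
  "gmul n m p s t = (\<lambda>i. if i < n then (s i + t i) mod p ^ m i else 0)"

definition cocycle2 :: "nat \<Rightarrow> (nat \<Rightarrow> nat) \<Rightarrow> nat \<Rightarrow> ((nat \<Rightarrow> nat) \<Rightarrow> (nat \<Rightarrow> nat) \<Rightarrow> 'a::ab_group_add) \<Rightarrow> bool" where
  "cocycle2 n m p f \<longleftrightarrow> (\<forall>g\<in>grp n m p. \<forall>h\<in>grp n m p. \<forall>k\<in>grp n m p.
      f h k - f (gmul n m p g h) k + f g (gmul n m p h k) - f g h = 0)"

definition coboundary2 :: "nat \<Rightarrow> (nat \<Rightarrow> nat) \<Rightarrow> nat \<Rightarrow> ((nat \<Rightarrow> nat) \<Rightarrow> (nat \<Rightarrow> nat) \<Rightarrow> 'a::ab_group_add) \<Rightarrow> bool" where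
  "coboundary2 n m p f \<longleftrightarrow> (\<exists>\<phi> :: (nat \<Rightarrow> nat) \<Rightarrow> 'a. \<forall>g\<in>grp n m p. \<forall>h\<in>grp n m p.
      f g h = \<phi> h - \<phi> (gmul n m p g h) + \<phi> g)"

definition cohomologous2 :: "nat \<Rightarrow> (nat \<Rightarrow> nat) \<Rightarrow> nat \<Rightarrow> ((nat \<Rightarrow> nat) \<Rightarrow> (nat \<Rightarrow> nat) \<Rightarrow> 'a::ab_group_add)
     \<Rightarrow> ((nat \<Rightarrow> nat) \<Rightarrow> (nat \<Rightarrow> nat) \<Rightarrow> 'a) \<Rightarrow> bool" where
  "cohomologous2 n m p f f' \<longleftrightarrow> coboundary2 n m p (\<lambda>g h. f g h - f' g h)"

text \<open>Lambda = {(i,j). i < j}, indices 0-based.\<close>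
definition Lam :: "nat \<Rightarrow> (nat \<times> nat) set" where
  "Lam n = {(i, j). i < j \<and> j < n}"

definition alpha :: "nat \<Rightarrow> (nat \<Rightarrow> nat) \<Rightarrow> nat \<Rightarrow> (nat \<Rightarrow> 'a::ab_group_add) \<Rightarrow> (nat \<times> nat \<Rightarrow> 'a)
     \<Rightarrow> (nat \<Rightarrow> nat) \<Rightarrow> (nat \<Rightarrow> nat) \<Rightarrow> 'a" where
  "alpha n m p a b s t =
     (\<Sum>i<n. natmul ((s i mod p ^ m i + t i mod p ^ m i) div p ^ m i) (a i))
     - (\<Sum>l\<in>Lam n. natmul (t (fst l) * s (snd l)) (b l))"

end

theory Submission
  imports Defs
begin


lemma natmul_add: "natmul (x+y) a = natmul x a + natmul y a"
  by (induction x) (simp_all add: add.assoc)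
lemma natmul_plus: "natmul k (a+b) = natmul k a + natmul k (b::'a::comm_monoid_add)"
  by (induction k) (simp_all add: algebra_simps)
lemma natmul_zero[simp]: "natmul k 0 = (0::'a::monoid_add)"
  by (induction k) simp_all
lemma natmul_uminus: "natmul k (-a) = - natmul k (a::'a::ab_group_add)"
  by (induction k) (simp_all add: algebra_simps)
lemma natmul_diff: "natmul k (a-b) = natmul k a - natmul k (b::'a::ab_group_add)"
  using natmul_plus[of k a "-b"] natmul_uminus[of k b] by simp
lemma natmul_mult: "natmul (x*y) a = natmul x (natmul y a)"
  by (induction x) (simp_all add: natmul_add)
lemma natmul_one[simp]: "natmul 1 a = a"
  by simp
lemma natmul_sum: "natmul k (\<Sum>i\<in>S. g i) = (\<Sum>i\<in>S. natmul k (g i :: 'a::comm_monoid_add))"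
  by (induction S rule: infinite_finite_induct) (simp_all add: natmul_plus)
lemma natmul_as_sum: "natmul k a = (\<Sum>i<k. a)"
  by (induction k) (simp_all add: add.commute)
lemma natmul_mod:
  assumes "natmul P b = 0" shows "natmul x b = natmul (x mod P) b"
proof -
  have "natmul x b = natmul (x mod P + (x div P) * P) b" by simp
  also have "\<dots> = natmul (x mod P) b + natmul ((x div P) * P) b" by (rule natmul_add)
  also have "natmul ((x div P) * P) b = 0" by (simp add: natmul_mult assms)
  finally show ?thesis by simp
qed
lemma natmul_if: "natmul (if c then 1 else 0) b = (if c then b else 0)"
  by simp

lemma ag1: "(x::'a::ab_group_add) + x' - (y + y') = (x - y) + (x' - y')" by (simp add: algebra_simps)
lemma ag2: "(x::'a::ab_group_add) - y - (x' - y') = (x - x') - (y - y')" by (simp add: algebra_simps)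

locale setting =
  fixes n :: nat and m :: "nat \<Rightarrow> nat" and p :: nat
  assumes p2: "2 \<le> p" and m1: "\<forall>i<n. 1 \<le> m i"
    and mono: "\<forall>i j. i \<le> j \<and> j < n \<longrightarrow> m i \<le> m j"
begin

abbreviation GG where "GG \<equiv> grp n m p"
abbreviation gm where "gm \<equiv> gmul n m p"

lemma p_pos[simp]: "0 < p" using p2 by simp
lemma Ppos[simp]: "0 < p ^ m i" using p2 by simp
lemma Pgt1: "i < n \<Longrightarrow> 1 < p ^ m i"
proof -
  assume "i < n" hence "1 \<le> m i" using m1 by simp
  moreover have "1 < p" using p2 by simp
  ultimately show ?thesis by (intro one_less_power) auto
qed

lemma gm_closed[simp]: "gm s t \<in> GG"
  using Ppos by (simp add: grp_def gmul_def)
lemma gm_comm: "gm s t = gm t s"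
  by (rule ext) (simp add: gmul_def add.commute[of "s _" "t _"])
lemma gm_assoc: "gm (gm s t) k = gm s (gm t k)"
  unfolding gmul_def by (intro ext) (simp add: mod_add_left_eq mod_add_right_eq add.assoc)
lemma z_in[simp]: "(\<lambda>_. 0) \<in> GG" by (simp add: grp_def)
lemma gm_z: "s \<in> GG \<Longrightarrow> gm (\<lambda>_. 0) s = s"
  by (auto simp: grp_def gmul_def)
lemma gm_z2: "s \<in> GG \<Longrightarrow> gm s (\<lambda>_. 0) = s"
  by (auto simp: grp_def gmul_def)
lemma grp_lt: "s \<in> GG \<Longrightarrow> i < n \<Longrightarrow> s i < p ^ m i" by (simp add: grp_def)
lemma grp_mod[simp]: "s \<in> GG \<Longrightarrow> s i mod p ^ m i = s i"
  by (cases "i < n") (auto simp: grp_def)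
lemma gm_app: "i < n \<Longrightarrow> gm s t i = (s i + t i) mod p ^ m i"
  by (simp add: gmul_def)

lemma finite_Lam[simp]: "finite (Lam n)"
proof -
  have "Lam n \<subseteq> {..<n} \<times> {..<n}" by (auto simp: Lam_def)
  thus ?thesis by (rule finite_subset) simp
qed

lemma alpha_add: "alpha n m p (\<lambda>i. a i + a' i) (\<lambda>l. b l + b' l) s t = alpha n m p a b s t + alpha n m p a' b' s t"
proof -
  have 1: "(\<Sum>i<n. natmul (c i) (a i + a' i)) = (\<Sum>i<n. natmul (c i) (a i)) + (\<Sum>i<n. natmul (c i) (a' i))" for c
    by (simp add: natmul_plus sum.distrib)
  have 2: "(\<Sum>l\<in>Lam n. natmul (d l) (b l + b' l)) = (\<Sum>l\<in>Lam n. natmul (d l) (b l)) + (\<Sum>l\<in>Lam n. natmul (d l) (b' l))" for d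
    by (simp add: natmul_plus sum.distrib)
  show ?thesis unfolding alpha_def 1 2 by (rule ag1)
qed

lemma alpha_diff: "(\<lambda>g h. alpha n m p a b g h - alpha n m p a' b' g h) = alpha n m p (\<lambda>i. a i - a' i) (\<lambda>l. b l - b' l)"
proof (intro ext)
  fix s t
  have 1: "(\<Sum>i<n. natmul (c i) (a i - a' i)) = (\<Sum>i<n. natmul (c i) (a i)) - (\<Sum>i<n. natmul (c i) (a' i))" for c
    by (simp add: natmul_diff sum_subtractf)
  have 2: "(\<Sum>l\<in>Lam n. natmul (d l) (b l - b' l)) = (\<Sum>l\<in>Lam n. natmul (d l) (b l)) - (\<Sum>l\<in>Lam n. natmul (d l) (b' l))" for d
    by (simp add: natmul_diff sum_subtractf)
  show "alpha n m p a b s t - alpha n m p a' b' s t = alpha n m p (\<lambda>i. a i - a' i) (\<lambda>l. b l - b' l) s t"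
    unfolding alpha_def 1 2 by (rule ag2)
qed

end


lemma carry_id:
  fixes P g h k :: nat assumes "0 < P"
  shows "(h + k) div P + (g + (h + k) mod P) div P = (g + h) div P + ((g + h) mod P + k) div P"
proof -
  have e1: "(g + (h + k) mod P) div P + (h + k) div P = (g + h + k) div P"
  proof -
    have eq: "g + h + k = (g + (h + k) mod P) + ((h + k) div P) * P" by (simp add: add.assoc)
    have "(g + h + k) div P = ((g + (h + k) mod P) + ((h + k) div P) * P) div P"
      using eq by (rule arg_cong)
    also have "\<dots> = (h + k) div P + (g + (h + k) mod P) div P"
      using assms by (intro div_mult_self1) simp
    finally show ?thesis by linarith
  qed
  have e2: "((g + h) mod P + k) div P + (g + h) div P = (g + h + k) div P"
  proof -
    have eq: "g + h + k = ((g + h) mod P + k) + ((g + h) div P) * P" by simp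
    have "(g + h + k) div P = (((g + h) mod P + k) + ((g + h) div P) * P) div P"
      using eq by (rule arg_cong)
    also have "\<dots> = (g + h) div P + ((g + h) mod P + k) div P"
      using assms by (intro div_mult_self1) simp
    finally show ?thesis by linarith
  qed
  show ?thesis using e1 e2 by linarith
qed

lemma natmul_cancel:
  assumes "c1 + c3 = c2 + (c4::nat)"
  shows "natmul c1 a - natmul c2 a + natmul c3 a - natmul c4 (a::'a::ab_group_add) = 0"
proof -
  have "natmul c1 a + natmul c3 a = natmul c2 a + natmul c4 a"
    unfolding natmul_add[symmetric] assms ..
  thus ?thesis by (simp add: algebra_simps)
qed

lemma natmul_cancel_mod:
  assumes "natmul P a = 0" and "(c1 + c3) mod P = (c2 + (c4::nat)) mod P"
  shows "natmul c1 a - natmul c2 a + natmul c3 a - natmul c4 (a::'a::ab_group_add) = 0"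
proof -
  have "natmul c1 a + natmul c3 a = natmul (c1 + c3) a" by (simp add: natmul_add)
  also have "\<dots> = natmul ((c1 + c3) mod P) a" using assms(1) by (rule natmul_mod)
  also have "\<dots> = natmul ((c2 + c4) mod P) a" by (simp only: assms(2))
  also have "\<dots> = natmul (c2 + c4) a" using assms(1) by (rule natmul_mod[symmetric])
  also have "\<dots> = natmul c2 a + natmul c4 a" by (simp add: natmul_add)
  finally show ?thesis by (simp add: algebra_simps)
qed

lemma sum4: "(\<Sum>i\<in>S. A i - B i + C i - D i) = sum A S - sum B S + sum C S - (sum D S :: 'a::ab_group_add)"
  by (simp add: sum.distrib sum_subtractf)

lemma ag3: "((a1::'a::ab_group_add) - b1) - (a2 - b2) + (a3 - b3) - (a4 - b4) = (a1 - a2 + a3 - a4) - (b1 - b2 + b3 - b4)"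
  by (simp add: algebra_simps)

context setting
begin

lemma part1:
  assumes bk: "\<forall>l\<in>Lam n. natmul (p ^ m (fst l)) (b l) = 0"
  shows "cocycle2 n m p (alpha n m p a b)"
  unfolding cocycle2_def
proof (intro ballI)
  fix g h k assume g: "g \<in> GG" and h: "h \<in> GG" and k: "k \<in> GG"
  define S1 where "S1 = (\<lambda>s t. \<Sum>i<n. natmul ((s i mod p ^ m i + t i mod p ^ m i) div p ^ m i) (a i))"
  define S2 where "S2 = (\<lambda>s t. \<Sum>l\<in>Lam n. natmul (t (fst l) * s (snd l)) (b l))"
  have al: "alpha n m p a b = (\<lambda>s t. S1 s t - S2 s t)"
    by (intro ext) (simp add: alpha_def S1_def S2_def)
  have 1: "S1 h k - S1 (gm g h) k + S1 g (gm h k) - S1 g h = 0"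
    unfolding S1_def sum4[symmetric]
  proof (rule sum.neutral, intro ballI)
    fix i assume "i \<in> {..<n}" hence i: "i < n" by simp
    show "natmul ((h i mod p ^ m i + k i mod p ^ m i) div p ^ m i) (a i) -
        natmul ((gm g h i mod p ^ m i + k i mod p ^ m i) div p ^ m i) (a i) +
        natmul ((g i mod p ^ m i + gm h k i mod p ^ m i) div p ^ m i) (a i) -
        natmul ((g i mod p ^ m i + h i mod p ^ m i) div p ^ m i) (a i) = 0"
      using g h k i by (intro natmul_cancel) (simp add: gm_app carry_id)
  qed
  have 2: "S2 h k - S2 (gm g h) k + S2 g (gm h k) - S2 g h = 0"
    unfolding S2_def sum4[symmetric]
  proof (rule sum.neutral, intro ballI)
    fix l assume l: "l \<in> Lam n"
    obtain i j where ij: "l = (i, j)" "i < j" "j < n" using l by (auto simp: Lam_def)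
    have dv: "p ^ m i dvd p ^ m j" using mono ij by (intro le_imp_power_dvd) auto
    have bl: "natmul (p ^ m i) (b (i, j)) = 0" using bk l ij by auto
    have c1: "(k i * h j + (h i + k i) mod p ^ m i * g j) mod p ^ m i
        = (k i * h j + (h i + k i) * g j) mod p ^ m i"
      by (rule mod_add_cong) (rule refl, rule mod_mult_left_eq)
    have c2: "(k i * ((g j + h j) mod p ^ m j) + h i * g j) mod p ^ m i
        = (k i * (g j + h j) + h i * g j) mod p ^ m i"
      by (rule mod_add_cong) (rule mod_mult_cong, rule refl, rule mod_mod_cancel[OF dv], rule refl)
    have c3: "k i * h j + (h i + k i) * g j = k i * (g j + h j) + h i * g j"
      by (simp add: algebra_simps)
    show "natmul (k (fst l) * h (snd l)) (b l) - natmul (k (fst l) * gm g h (snd l)) (b l) +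
        natmul (gm h k (fst l) * g (snd l)) (b l) - natmul (h (fst l) * g (snd l)) (b l) = 0"
      using ij by (simp only: fst_conv snd_conv gm_app less_trans[OF ij(2) ij(3)])
        (rule natmul_cancel_mod[OF bl], simp only: c1 c2 c3)
  qed
  show "alpha n m p a b h k - alpha n m p a b (gm g h) k + alpha n m p a b g (gm h k) - alpha n m p a b g h = 0"
    unfolding al using 1 2 by (simp only: ag3) simp
qed

end


lemma sum3: "(\<Sum>i\<in>S. A i - B i + C i) = sum A S - sum B S + (sum C S :: 'a::ab_group_add)"
  by (simp add: sum.distrib sum_subtractf)

lemma sum_carry: "(\<Sum>r<Suc Q. natmul ((r + 1) div Suc Q) y) = y"
proof -
  have "(\<Sum>r<Q. natmul ((r + 1) div Suc Q) y) = 0"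
    by (rule sum.neutral) simp
  thus ?thesis by simp
qed

lemma sum_wrap: "(\<Sum>r<Suc Q. F ((r + 1) mod Suc Q)) = (\<Sum>r<Suc Q. (F r :: 'a::comm_monoid_add))"
proof -
  have "(\<Sum>r<Suc Q. F ((r + 1) mod Suc Q)) = (\<Sum>r<Q. F ((r + 1) mod Suc Q)) + F 0"
    by simp
  also have "(\<Sum>r<Q. F ((r + 1) mod Suc Q)) = (\<Sum>r<Q. F (Suc r))"
    by (rule sum.cong) simp_all
  also have "(\<Sum>r<Q. F (Suc r)) + F 0 = (\<Sum>r<Suc Q. F r)"
    unfolding sum.lessThan_Suc_shift by (rule add.commute)
  finally show ?thesis .
qed

context setting
begin

definition ev :: "nat \<Rightarrow> nat \<Rightarrow> nat \<Rightarrow> nat" where "ev i r = (\<lambda>k. if k = i then r else 0)"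

lemma ev_in: "i < n \<Longrightarrow> r < p ^ m i \<Longrightarrow> ev i r \<in> GG"
  by (auto simp: ev_def grp_def)

lemma gm_ev: "i < n \<Longrightarrow> gm (ev i r) (ev i r') = ev i ((r + r') mod p ^ m i)"
  by (rule ext) (auto simp: ev_def gmul_def)

lemma part3_suff:
  assumes "\<forall>i<n. \<exists>x. a i = natmul (p ^ m i) x" and "\<forall>l\<in>Lam n. b l = 0"
  shows "coboundary2 n m p (alpha n m p a b)"
proof -
  from assms(1) have "\<forall>i. \<exists>y. i < n \<longrightarrow> a i = natmul (p ^ m i) y" by blast
  hence "\<exists>x. \<forall>i. i < n \<longrightarrow> a i = natmul (p ^ m i) (x i)" by (rule choice)
  then obtain x where x: "\<forall>i. i < n \<longrightarrow> a i = natmul (p ^ m i) (x i)" by blast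
  show ?thesis unfolding coboundary2_def
  proof (intro exI[of _ "\<lambda>s. \<Sum>i<n. natmul (s i) (x i)"] ballI)
    fix g h assume g: "g \<in> GG" and h: "h \<in> GG"
    have b0: "(\<Sum>l\<in>Lam n. natmul (h (fst l) * g (snd l)) (b l)) = 0"
      using assms(2) by (intro sum.neutral) simp
    have "(\<Sum>i<n. natmul ((g i mod p ^ m i + h i mod p ^ m i) div p ^ m i) (a i))
       = (\<Sum>i<n. natmul (h i) (x i) - natmul (gm g h i) (x i) + natmul (g i) (x i))"
    proof (rule sum.cong)
      fix i assume "i \<in> {..<n}" hence i: "i < n" by simp
      define P where "P = p ^ m i"
      have "natmul (g i + h i) (x i) = natmul ((g i + h i) mod P + (g i + h i) div P * P) (x i)"
        by simp
      also have "\<dots> = natmul ((g i + h i) mod P) (x i) + natmul ((g i + h i) div P) (natmul P (x i))"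
        by (simp only: natmul_add natmul_mult)
      finally have e0: "natmul (g i + h i) (x i) = natmul ((g i + h i) mod P) (x i) + natmul ((g i + h i) div P) (natmul P (x i))" .
      have e: "natmul (g i) (x i) + natmul (h i) (x i) = natmul ((g i + h i) mod P) (x i) + natmul ((g i + h i) div P) (natmul P (x i))"
        using e0 by (simp only: natmul_add)
      show "natmul ((g i mod p ^ m i + h i mod p ^ m i) div p ^ m i) (a i) = natmul (h i) (x i) - natmul (gm g h i) (x i) + natmul (g i) (x i)"
        using g h i x e unfolding P_def by (simp add: gm_app algebra_simps)
    qed simp
    thus "alpha n m p a b g h = (\<Sum>i<n. natmul (h i) (x i)) - (\<Sum>i<n. natmul (gm g h i) (x i)) + (\<Sum>i<n. natmul (g i) (x i))"
      unfolding alpha_def b0 sum3[symmetric] by simp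
  qed
qed

lemma alpha_ev_ji:
  assumes "i < j" "j < n"
  shows "alpha n m p a b (ev j 1) (ev i 1) = - b (i, j)"
proof -
  have c: "(\<Sum>k<n. natmul ((ev j 1 k mod p ^ m k + ev i 1 k mod p ^ m k) div p ^ m k) (a k)) = 0"
  proof (rule sum.neutral, intro ballI)
    fix k assume "k \<in> {..<n}" hence k: "k < n" by simp
    have "ev j 1 k mod p ^ m k + ev i 1 k mod p ^ m k < p ^ m k"
      using Pgt1[OF k] assms by (auto simp: ev_def)
    thus "natmul ((ev j 1 k mod p ^ m k + ev i 1 k mod p ^ m k) div p ^ m k) (a k) = 0"
      by simp
  qed
  have d: "(\<Sum>l\<in>Lam n. natmul (ev i 1 (fst l) * ev j 1 (snd l)) (b l)) = (\<Sum>l\<in>Lam n. if l = (i, j) then b l else 0)"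
  proof (rule sum.cong)
    fix l assume "l \<in> Lam n"
    show "natmul (ev i 1 (fst l) * ev j 1 (snd l)) (b l) = (if l = (i, j) then b l else 0)"
      by (cases l) (auto simp: ev_def)
  qed simp
  have ij: "(i, j) \<in> Lam n" using assms by (simp add: Lam_def)
  show ?thesis unfolding alpha_def c d using ij by simp
qed

lemma alpha_ev_ij:
  assumes "i < j" "j < n"
  shows "alpha n m p a b (ev i 1) (ev j 1) = 0"
proof -
  have c: "(\<Sum>k<n. natmul ((ev i 1 k mod p ^ m k + ev j 1 k mod p ^ m k) div p ^ m k) (a k)) = 0"
  proof (rule sum.neutral, intro ballI)
    fix k assume "k \<in> {..<n}" hence k: "k < n" by simp
    have "ev i 1 k mod p ^ m k + ev j 1 k mod p ^ m k < p ^ m k"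
      using Pgt1[OF k] assms by (auto simp: ev_def)
    thus "natmul ((ev i 1 k mod p ^ m k + ev j 1 k mod p ^ m k) div p ^ m k) (a k) = 0"
      by simp
  qed
  have d: "(\<Sum>l\<in>Lam n. natmul (ev j 1 (fst l) * ev i 1 (snd l)) (b l)) = 0"
  proof (rule sum.neutral, intro ballI)
    fix l assume "l \<in> Lam n"
    thus "natmul (ev j 1 (fst l) * ev i 1 (snd l)) (b l) = 0"
      using assms by (cases l) (auto simp: ev_def Lam_def)
  qed
  show ?thesis unfolding alpha_def c d by simp
qed

lemma alpha_ev_r:
  assumes "i < n" "r < p ^ m i"
  shows "alpha n m p a b (ev i r) (ev i 1) = natmul ((r + 1) div p ^ m i) (a i)"
proof -
  have c: "(\<Sum>k<n. natmul ((ev i r k mod p ^ m k + ev i 1 k mod p ^ m k) div p ^ m k) (a k))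
      = (\<Sum>k<n. if k = i then natmul ((r + 1) div p ^ m i) (a i) else 0)"
  proof (rule sum.cong)
    fix k assume "k \<in> {..<n}"
    show "natmul ((ev i r k mod p ^ m k + ev i 1 k mod p ^ m k) div p ^ m k) (a k)
      = (if k = i then natmul ((r + 1) div p ^ m i) (a i) else 0)"
      using assms Pgt1[OF assms(1)] by (auto simp: ev_def)
  qed simp
  have d: "(\<Sum>l\<in>Lam n. natmul (ev i 1 (fst l) * ev i r (snd l)) (b l)) = 0"
  proof (rule sum.neutral, intro ballI)
    fix l assume "l \<in> Lam n"
    thus "natmul (ev i 1 (fst l) * ev i r (snd l)) (b l) = 0"
      by (cases l) (auto simp: ev_def Lam_def)
  qed
  show ?thesis unfolding alpha_def c d using assms by simp
qed

lemma part3_nec: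
  assumes "coboundary2 n m p (alpha n m p a b)"
  shows "(\<forall>i<n. \<exists>x. a i = natmul (p ^ m i) x) \<and> (\<forall>l\<in>Lam n. b l = 0)"
proof -
  obtain \<phi> where phi: "\<forall>g\<in>GG. \<forall>h\<in>GG. alpha n m p a b g h = \<phi> h - \<phi> (gm g h) + \<phi> g"
    using assms unfolding coboundary2_def by blast
  have sym: "alpha n m p a b g h = alpha n m p a b h g" if "g \<in> GG" "h \<in> GG" for g h
  proof -
    have 1: "alpha n m p a b g h = \<phi> h - \<phi> (gm g h) + \<phi> g" using phi that by blast
    have 2: "alpha n m p a b h g = \<phi> g - \<phi> (gm h g) + \<phi> h" using phi that by blast
    show ?thesis unfolding 1 2 gm_comm[of h g] by (simp add: algebra_simps)
  qed
  have B: "\<forall>l\<in>Lam n. b l = 0"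
  proof
    fix l assume "l \<in> Lam n"
    then obtain i j where ij: "l = (i, j)" "i < j" "j < n" by (auto simp: Lam_def)
    have "i < n" using ij by simp
    have "- b (i, j) = alpha n m p a b (ev j 1) (ev i 1)" by (rule alpha_ev_ji[OF ij(2,3), symmetric])
    also have "\<dots> = alpha n m p a b (ev i 1) (ev j 1)"
      using sym ev_in Pgt1 ij \<open>i < n\<close> by simp
    also have "\<dots> = 0" using alpha_ev_ij ij by simp
    finally show "b l = 0" using ij by simp
  qed
  have A: "\<forall>i<n. \<exists>x. a i = natmul (p ^ m i) x"
  proof (intro allI impI)
    fix i assume i: "i < n"
    obtain Q where Q: "p ^ m i = Suc Q" using Ppos[of i] by (metis Suc_pred)
    have d: "ev i 1 \<in> GG" using ev_in i Pgt1 by simp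
    have "a i = (\<Sum>r<Suc Q. natmul ((r + 1) div Suc Q) (a i))" by (simp only: sum_carry)
    also have "\<dots> = (\<Sum>r<Suc Q. alpha n m p a b (ev i r) (ev i 1))"
      by (rule sum.cong) (simp_all only: Q[symmetric] alpha_ev_r[OF i] lessThan_iff)
    also have "\<dots> = (\<Sum>r<Suc Q. \<phi> (ev i 1) - \<phi> (ev i ((r + 1) mod Suc Q)) + \<phi> (ev i r))"
    proof (rule sum.cong)
      fix r assume "r \<in> {..<Suc Q}"
      hence r: "r < p ^ m i" using Q by simp
      show "alpha n m p a b (ev i r) (ev i 1) = \<phi> (ev i 1) - \<phi> (ev i ((r + 1) mod Suc Q)) + \<phi> (ev i r)"
        using phi ev_in[OF i r] d gm_ev[OF i, of r 1] Q by simp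
    qed simp
    also have "\<dots> = natmul (Suc Q) (\<phi> (ev i 1))"
      unfolding sum3 sum_wrap[of "\<lambda>r. \<phi> (ev i r)"] natmul_as_sum by simp
    finally show "\<exists>x. a i = natmul (p ^ m i) x" using Q by auto
  qed
  show ?thesis using A B by blast
qed

lemma part3:
  shows "coboundary2 n m p (alpha n m p a b) \<longleftrightarrow>
     (\<forall>i<n. \<exists>x. a i = natmul (p ^ m i) x) \<and> (\<forall>l\<in>Lam n. b l = 0)"
  using part3_nec part3_suff by blast

lemma part4:
  shows "cohomologous2 n m p (alpha n m p a b) (alpha n m p a' b') \<longleftrightarrow>
     (\<forall>i<n. \<exists>x. a i - a' i = natmul (p ^ m i) x) \<and> (\<forall>l\<in>Lam n. b l = b' l)"
  unfolding cohomologous2_def alpha_diff part3 by simp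

end


lemma ag4: "(a::'a::ab_group_add) - b + c - d = 0 \<Longrightarrow> a + c = d + b"
proof -
  assume "a - b + c - d = 0"
  hence "a + c - (d + b) = 0" by (simp add: algebra_simps)
  thus ?thesis by simp
qed

lemma ag5: "F1 + F2 = F3 + F4 \<Longrightarrow> (x::'a::ab_group_add) + (y + w + F1) + F2 = x + y + F3 + w + F4"
proof -
  assume h: "F1 + F2 = F3 + F4"
  have "x + (y + w + F1) + F2 = (x + y + w) + (F1 + F2)" by (simp add: algebra_simps)
  also have "\<dots> = (x + y + w) + (F3 + F4)" using h by simp
  also have "\<dots> = x + y + F3 + w + F4" by (simp add: algebra_simps)
  finally show ?thesis .
qed

locale extc = setting +
  fixes f :: "(nat \<Rightarrow> nat) \<Rightarrow> (nat \<Rightarrow> nat) \<Rightarrow> 'a::ab_group_add"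
  assumes coc: "cocycle2 n m p f"
    and fl: "\<forall>k\<in>grp n m p. f (\<lambda>_. 0) k = 0"
    and fr: "\<forall>g\<in>grp n m p. f g (\<lambda>_. 0) = 0"
begin

definition EC :: "('a \<times> (nat \<Rightarrow> nat)) set" where "EC = {x. snd x \<in> GG}"
definition emul :: "'a \<times> (nat \<Rightarrow> nat) \<Rightarrow> 'a \<times> (nat \<Rightarrow> nat) \<Rightarrow> 'a \<times> (nat \<Rightarrow> nat)" (infixl "\<odot>" 70)
  where "x \<odot> y = (fst x + fst y + f (snd x) (snd y), gm (snd x) (snd y))"
definition C :: "'a \<Rightarrow> 'a \<times> (nat \<Rightarrow> nat)" where "C c = (c, (\<lambda>_. 0))"
definition eone :: "'a \<times> (nat \<Rightarrow> nat)" where "eone = C 0"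
definition epow :: "'a \<times> (nat \<Rightarrow> nat) \<Rightarrow> nat \<Rightarrow> 'a \<times> (nat \<Rightarrow> nat)"
  where "epow x k = ((\<lambda>y. y \<odot> x) ^^ k) eone"
definition e :: "nat \<Rightarrow> 'a \<times> (nat \<Rightarrow> nat)" where "e i = (0, ev i 1)"

lemma emul_in[simp]: "x \<odot> y \<in> EC" by (simp add: EC_def emul_def)
lemma C_in[simp]: "C c \<in> EC" by (simp add: EC_def C_def)
lemma eone_in[simp]: "eone \<in> EC" by (simp add: eone_def)
lemma epow_0[simp]: "epow x 0 = eone" by (simp add: epow_def)
lemma epow_Suc[simp]: "epow x (Suc k) = epow x k \<odot> x" by (simp add: epow_def)
lemma epow_in[simp]: "epow x k \<in> EC" by (cases k) simp_all
lemma e_in[simp]: "i < n \<Longrightarrow> e i \<in> EC" using ev_in Pgt1 by (simp add: EC_def e_def)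
lemma fst_emul: "fst (x \<odot> y) = fst x + fst y + f (snd x) (snd y)" by (simp add: emul_def)
lemma snd_emul[simp]: "snd (x \<odot> y) = gm (snd x) (snd y)" by (simp add: emul_def)

lemma assocL:
  assumes "x \<in> EC" "y \<in> EC" "w \<in> EC"
  shows "x \<odot> (y \<odot> w) = x \<odot> y \<odot> w"
proof -
  have "f (snd y) (snd w) - f (gm (snd x) (snd y)) (snd w) + f (snd x) (gm (snd y) (snd w)) - f (snd x) (snd y) = 0"
    using coc assms unfolding cocycle2_def EC_def by blast
  hence h: "f (snd y) (snd w) + f (snd x) (gm (snd y) (snd w)) = f (snd x) (snd y) + f (gm (snd x) (snd y)) (snd w)"
    by (rule ag4)
  show ?thesis unfolding emul_def
    by (simp only: fst_conv snd_conv gm_assoc ag5[OF h])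
qed

lemma l_one[simp]: "x \<in> EC \<Longrightarrow> eone \<odot> x = x"
  using fl by (cases x) (simp add: emul_def eone_def C_def EC_def gm_z)
lemma r_one[simp]: "x \<in> EC \<Longrightarrow> x \<odot> eone = x"
  using fr by (cases x) (simp add: emul_def eone_def C_def EC_def gm_z2)
lemma C_left: "y \<in> EC \<Longrightarrow> C c \<odot> y = (c + fst y, snd y)"
  using fl by (simp add: emul_def C_def EC_def gm_z)
lemma C_right: "y \<in> EC \<Longrightarrow> y \<odot> C c = (fst y + c, snd y)"
  using fr by (simp add: emul_def C_def EC_def gm_z2)
lemma C_comm: "y \<in> EC \<Longrightarrow> C c \<odot> y = y \<odot> C c"
  by (simp add: C_left C_right add.commute)
lemma C_C: "C a \<odot> C b = C (a + b)"
  unfolding C_right[OF C_in] by (simp add: C_def)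
lemma CR: "y \<in> EC \<Longrightarrow> w \<in> EC \<Longrightarrow> y \<odot> C d \<odot> w = y \<odot> w \<odot> C d"
proof -
  assume y: "y \<in> EC" and w: "w \<in> EC"
  have "y \<odot> C d \<odot> w = y \<odot> (C d \<odot> w)" using y w by (simp add: assocL)
  also have "\<dots> = y \<odot> (w \<odot> C d)" using w by (simp add: C_comm)
  also have "\<dots> = y \<odot> w \<odot> C d" using y w by (simp add: assocL)
  finally show ?thesis .
qed
lemma CC: "y \<in> EC \<Longrightarrow> y \<odot> C d \<odot> C d' = y \<odot> C (d + d')"
  by (simp add: assocL[symmetric] C_C)
lemma C0: "y \<in> EC \<Longrightarrow> y \<odot> C 0 = y"
  by (simp add: C_right)

lemma epow_add: "x \<in> EC \<Longrightarrow> epow x a \<odot> epow x b = epow x (a + b)"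
proof (induction b)
  case 0 thus ?case by simp
next
  case (Suc b)
  have "epow x a \<odot> epow x (Suc b) = epow x a \<odot> epow x b \<odot> x"
    using Suc.prems by (simp add: assocL)
  thus ?case using Suc by simp
qed

lemma epow_mult: "x \<in> EC \<Longrightarrow> epow (epow x a) b = epow x (a * b)"
proof (induction b)
  case 0 thus ?case by simp
next
  case (Suc b)
  thus ?case by (simp add: epow_add add.commute)
qed

lemma epow_C: "epow (C c) k = C (natmul k c)"
  by (induction k) (simp_all add: eone_def C_C add.commute)

lemma same_snd: "x \<in> EC \<Longrightarrow> y \<in> EC \<Longrightarrow> snd x = snd y \<Longrightarrow> x = y \<odot> C (fst x - fst y)"
  by (simp add: C_right prod_eq_iff)

lemma cancelC: "x \<in> EC \<Longrightarrow> x \<odot> C w = x \<Longrightarrow> w = 0"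
  by (simp add: C_right prod_eq_iff)

lemma L1:
  assumes u: "u \<in> EC" and v: "v \<in> EC" and h: "u \<odot> v = v \<odot> u \<odot> C c"
  shows "u \<odot> epow v t = epow v t \<odot> u \<odot> C (natmul t c)"
proof (induction t)
  case 0 thus ?case using u by (simp add: C0)
next
  case (Suc t)
  let ?V = "epow v t"
  have "u \<odot> epow v (Suc t) = u \<odot> ?V \<odot> v" using u v by (simp add: assocL)
  also have "\<dots> = ?V \<odot> u \<odot> C (natmul t c) \<odot> v" using Suc by simp
  also have "\<dots> = ?V \<odot> u \<odot> v \<odot> C (natmul t c)" using u v by (intro CR) simp_all
  also have "\<dots> = ?V \<odot> (u \<odot> v) \<odot> C (natmul t c)" using u v by (simp add: assocL)
  also have "\<dots> = ?V \<odot> (v \<odot> u \<odot> C c) \<odot> C (natmul t c)" using h by simp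
  also have "\<dots> = ?V \<odot> v \<odot> u \<odot> C c \<odot> C (natmul t c)" using u v by (simp add: assocL)
  also have "\<dots> = epow v (Suc t) \<odot> u \<odot> C (natmul (Suc t) c)" using u v by (simp add: CC)
  finally show ?case .
qed

lemma L2:
  assumes u: "u \<in> EC" and v: "v \<in> EC" and h: "u \<odot> v = v \<odot> u \<odot> C c"
  shows "epow u s \<odot> epow v t = epow v t \<odot> epow u s \<odot> C (natmul (s * t) c)"
proof (induction s)
  case 0 thus ?case using v by (simp add: C0)
next
  case (Suc s)
  let ?V = "epow v t" and ?U = "epow u s"
  have "epow u (Suc s) \<odot> ?V = ?U \<odot> (u \<odot> ?V)" using u v by (simp add: assocL)
  also have "\<dots> = ?U \<odot> (?V \<odot> u \<odot> C (natmul t c))" using L1[OF u v h] by simp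
  also have "\<dots> = ?U \<odot> ?V \<odot> u \<odot> C (natmul t c)" using u v by (simp add: assocL)
  also have "\<dots> = ?V \<odot> ?U \<odot> C (natmul (s * t) c) \<odot> u \<odot> C (natmul t c)" using Suc by simp
  also have "\<dots> = ?V \<odot> ?U \<odot> u \<odot> C (natmul (s * t) c) \<odot> C (natmul t c)" using u v by (subst CR) simp_all
  also have "\<dots> = ?V \<odot> epow u (Suc s) \<odot> C (natmul (Suc s * t) c)"
    using u v by (simp add: CC assocL natmul_add add.commute)
  finally show ?case .
qed

end


lemma Lam_Suc: "Lam (Suc k) = Lam k \<union> (\<lambda>i. (i, k)) ` {..<k}"
  by (auto simp: Lam_def)

lemma lam_sum: "(\<Sum>j<k. \<Sum>i<j. g i j) = (\<Sum>l\<in>Lam k. (g (fst l) (snd l) :: 'a::comm_monoid_add))"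
proof (induction k)
  case 0 thus ?case by (simp add: Lam_def)
next
  case (Suc k)
  have fin: "finite (Lam k)"
  proof -
    have "Lam k \<subseteq> {..<k} \<times> {..<k}" by (auto simp: Lam_def)
    thus ?thesis by (rule finite_subset) simp
  qed
  have disj: "Lam k \<inter> (\<lambda>i. (i, k)) ` {..<k} = {}" by (auto simp: Lam_def)
  have inj: "inj_on (\<lambda>i. (i, k)) {..<k}" by (auto simp: inj_on_def)
  have "(\<Sum>l\<in>Lam (Suc k). g (fst l) (snd l)) = (\<Sum>l\<in>Lam k. g (fst l) (snd l)) + (\<Sum>l\<in>(\<lambda>i. (i, k)) ` {..<k}. g (fst l) (snd l))"
    unfolding Lam_Suc using fin disj by (intro sum.union_disjoint) auto
  also have "(\<Sum>l\<in>(\<lambda>i. (i, k)) ` {..<k}. g (fst l) (snd l)) = (\<Sum>i<k. g i k)"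
    using inj by (simp add: sum.reindex)
  finally show ?case using Suc by simp
qed

context extc
begin

lemma snd_epow_e: "i < n \<Longrightarrow> snd (epow (e i) r) = ev i (r mod p ^ m i)"
proof (induction r)
  case 0 thus ?case by (auto simp: eone_def C_def ev_def)
next
  case (Suc r)
  have "Suc (r mod p ^ m i) mod p ^ m i = Suc r mod p ^ m i"
    using mod_add_left_eq[of r "p ^ m i" 1] by simp
  thus ?case using Suc by (simp add: gm_ev e_def)
qed

definition aa :: "nat \<Rightarrow> 'a" where "aa i = fst (epow (e i) (p ^ m i))"

lemma epow_e_P: "i < n \<Longrightarrow> epow (e i) (p ^ m i) = C (aa i)"
proof -
  assume i: "i < n"
  have "snd (epow (e i) (p ^ m i)) = (\<lambda>_. 0)" using snd_epow_e[OF i] by (auto simp: ev_def)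
  thus ?thesis by (simp add: aa_def C_def prod_eq_iff)
qed

lemma epow_e_split: "i < n \<Longrightarrow> epow (e i) r = epow (e i) (r mod p ^ m i) \<odot> C (natmul (r div p ^ m i) (aa i))"
proof -
  assume i: "i < n"
  have "epow (e i) r = epow (e i) (r mod p ^ m i + p ^ m i * (r div p ^ m i))" by simp
  also have "\<dots> = epow (e i) (r mod p ^ m i) \<odot> epow (e i) (p ^ m i * (r div p ^ m i))"
    using i by (simp add: epow_add)
  also have "epow (e i) (p ^ m i * (r div p ^ m i)) = C (natmul (r div p ^ m i) (aa i))"
    using i by (simp add: epow_mult[symmetric] epow_e_P epow_C)
  finally show ?thesis .
qed

definition cc :: "nat \<Rightarrow> nat \<Rightarrow> 'a" where "cc i j = fst (e j \<odot> e i) - fst (e i \<odot> e j)"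

lemma comm_e: "i < n \<Longrightarrow> j < n \<Longrightarrow> e j \<odot> e i = e i \<odot> e j \<odot> C (cc i j)"
  unfolding cc_def by (rule same_snd) (simp_all add: gm_comm)

lemma cc_kill: "i < n \<Longrightarrow> j < n \<Longrightarrow> natmul (p ^ m i) (cc i j) = 0"
proof -
  assume i: "i < n" and j: "j < n"
  have "e j \<odot> epow (e i) (p ^ m i) = epow (e i) (p ^ m i) \<odot> e j \<odot> C (natmul (p ^ m i) (cc i j))"
    using i j by (intro L1 comm_e) simp_all
  moreover have "e j \<odot> epow (e i) (p ^ m i) = epow (e i) (p ^ m i) \<odot> e j"
    using i j by (simp add: epow_e_P C_comm)
  ultimately have "epow (e i) (p ^ m i) \<odot> e j \<odot> C (natmul (p ^ m i) (cc i j)) = epow (e i) (p ^ m i) \<odot> e j"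
    by simp
  thus ?thesis by (rule cancelC[rotated]) simp
qed

fun sig :: "nat \<Rightarrow> (nat \<Rightarrow> nat) \<Rightarrow> 'a \<times> (nat \<Rightarrow> nat)" where
  "sig 0 s = eone"
| "sig (Suc k) s = sig k s \<odot> epow (e k) (s k)"

lemma sig_in[simp]: "sig k s \<in> EC" by (cases k) simp_all

lemma snd_sig: "k \<le> n \<Longrightarrow> snd (sig k s) = (\<lambda>j. if j < k then s j mod p ^ m j else 0)"
proof (induction k)
  case 0 thus ?case by (simp add: eone_def C_def)
next
  case (Suc k)
  hence k: "k < n" by simp
  show ?case
    using Suc k by (auto simp: snd_epow_e gmul_def ev_def)
qed

lemma L3:
  assumes k: "k < n" and k': "k' \<le> k"
  shows "epow (e k) sv \<odot> sig k' t = sig k' t \<odot> epow (e k) sv \<odot> C (\<Sum>i<k'. natmul (t i * sv) (cc i k))"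
  using k'
proof (induction k')
  case 0 thus ?case by (simp add: C0)
next
  case (Suc k')
  let ?U = "epow (e k) sv" and ?S = "sig k' t" and ?E = "epow (e k') (t k')"
  let ?X = "\<Sum>i<k'. natmul (t i * sv) (cc i k)" and ?Y = "natmul (t k' * sv) (cc k' k)"
  have k'k: "k' < n" using Suc k by simp
  have "?U \<odot> sig (Suc k') t = ?U \<odot> ?S \<odot> ?E" by (simp add: assocL)
  also have "\<dots> = ?S \<odot> ?U \<odot> C ?X \<odot> ?E" using Suc by simp
  also have "\<dots> = ?S \<odot> ?U \<odot> ?E \<odot> C ?X" by (intro CR) simp_all
  also have "\<dots> = ?S \<odot> (?U \<odot> ?E) \<odot> C ?X" by (simp add: assocL)
  also have "?U \<odot> ?E = ?E \<odot> ?U \<odot> C ?Y"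
    using L2[of "e k" "e k'" "cc k' k" sv "t k'"] comm_e[OF k'k k] k k'k by (simp add: mult.commute)
  also have "?S \<odot> (?E \<odot> ?U \<odot> C ?Y) \<odot> C ?X = sig (Suc k') t \<odot> ?U \<odot> C (?Y + ?X)"
    by (simp add: assocL CC)
  finally show ?case by (simp add: add.commute)
qed

definition W :: "nat \<Rightarrow> (nat \<Rightarrow> nat) \<Rightarrow> (nat \<Rightarrow> nat) \<Rightarrow> 'a" where
  "W k s t = (\<Sum>i<k. natmul ((s i + t i) div p ^ m i) (aa i)) + (\<Sum>j<k. \<Sum>i<j. natmul (t i * s j) (cc i j))"

lemma M:
  assumes s: "s \<in> GG" and t: "t \<in> GG"
  shows "k \<le> n \<Longrightarrow> sig k s \<odot> sig k t = sig k (gm s t) \<odot> C (W k s t)"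
proof (induction k)
  case 0 thus ?case by (simp add: W_def eone_def C_C)
next
  case (Suc k)
  hence k: "k < n" and IH: "sig k s \<odot> sig k t = sig k (gm s t) \<odot> C (W k s t)" by simp_all
  let ?Ss = "sig k s" and ?St = "sig k t" and ?Es = "epow (e k) (s k)" and ?Et = "epow (e k) (t k)"
  let ?X = "\<Sum>i<k. natmul (t i * s k) (cc i k)"
  let ?q = "natmul ((s k + t k) div p ^ m k) (aa k)"
  have "sig (Suc k) s \<odot> sig (Suc k) t = ?Ss \<odot> (?Es \<odot> ?St) \<odot> ?Et" by (simp add: assocL)
  also have "?Es \<odot> ?St = ?St \<odot> ?Es \<odot> C ?X" using L3[OF k, of k "s k" t] by simp
  also have "?Ss \<odot> (?St \<odot> ?Es \<odot> C ?X) \<odot> ?Et = ?Ss \<odot> ?St \<odot> ?Es \<odot> C ?X \<odot> ?Et"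
    by (simp add: assocL)
  also have "\<dots> = ?Ss \<odot> ?St \<odot> ?Es \<odot> ?Et \<odot> C ?X"
    by (rule CR) simp_all
  also have "\<dots> = ?Ss \<odot> ?St \<odot> (?Es \<odot> ?Et) \<odot> C ?X" by (simp add: assocL)
  also have "?Es \<odot> ?Et = epow (e k) (s k + t k)" using k by (simp add: epow_add)
  also have "\<dots> = epow (e k) (gm s t k) \<odot> C ?q" using k by (simp add: gm_app epow_e_split[OF k, of "s k + t k"])
  also have "?Ss \<odot> ?St = sig k (gm s t) \<odot> C (W k s t)" by (rule IH)
  also have "sig k (gm s t) \<odot> C (W k s t) \<odot> (epow (e k) (gm s t k) \<odot> C ?q) \<odot> C ?X
      = sig k (gm s t) \<odot> C (W k s t) \<odot> epow (e k) (gm s t k) \<odot> C ?q \<odot> C ?X"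
    by (simp add: assocL)
  also have "sig k (gm s t) \<odot> C (W k s t) \<odot> epow (e k) (gm s t k) = sig k (gm s t) \<odot> epow (e k) (gm s t k) \<odot> C (W k s t)"
    by (rule CR) simp_all
  also have "sig k (gm s t) \<odot> epow (e k) (gm s t k) \<odot> C (W k s t) \<odot> C ?q \<odot> C ?X
      = sig (Suc k) (gm s t) \<odot> C (W k s t + ?q + ?X)"
    by (simp add: CC)
  also have "W k s t + ?q + ?X = W (Suc k) s t"
    by (simp add: W_def algebra_simps)
  finally show ?case .
qed

end


lemma ag6: "((A::'a::ab_group_add) - c) - (B - c) + (C' - c) - (D - c) = A - B + C' - D"
  by (simp add: algebra_simps)

context extc
begin

lemma sig_n: "s \<in> GG \<Longrightarrow> sig n s = (fst (sig n s), s)"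
proof -
  assume s: "s \<in> GG"
  have "snd (sig n s) = s"
    using s by (auto simp: snd_sig grp_def)
  thus ?thesis by (simp add: prod_eq_iff)
qed

lemma part2_norm:
  "\<exists>a b. (\<forall>l\<in>Lam n. natmul (p ^ m (fst l)) (b l) = 0) \<and> cohomologous2 n m p f (alpha n m p a b)"
proof (intro exI conjI)
  let ?b = "\<lambda>l. - cc (fst l) (snd l)"
  show "\<forall>l\<in>Lam n. natmul (p ^ m (fst l)) (?b l) = 0"
    by (auto simp: Lam_def natmul_uminus cc_kill)
  show "cohomologous2 n m p f (alpha n m p aa ?b)"
    unfolding cohomologous2_def coboundary2_def
  proof (intro exI[of _ "\<lambda>s. - fst (sig n s)"] ballI)
    fix g h assume g: "g \<in> GG" and h: "h \<in> GG"
    have "fst (sig n g \<odot> sig n h) = fst (sig n (gm g h) \<odot> C (W n g h))"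
      using M[OF g h, of n] by simp
    moreover have "snd (sig n g) = g" "snd (sig n h) = h"
      using g h by (auto simp: snd_sig grp_def)
    ultimately have eq: "fst (sig n g) + fst (sig n h) + f g h = fst (sig n (gm g h)) + W n g h"
      by (simp add: fst_emul C_right)
    have Wa: "W n g h = alpha n m p aa ?b g h"
      unfolding W_def alpha_def lam_sum
      using g h by (simp add: natmul_uminus sum_negf)
    show "f g h - alpha n m p aa ?b g h = - fst (sig n h) - - fst (sig n (gm g h)) + - fst (sig n g)"
      using eq unfolding Wa[symmetric] by (simp add: algebra_simps)
  qed
qed

end

context setting
begin

lemma part2:
  assumes coc: "cocycle2 n m p (f :: (nat \<Rightarrow> nat) \<Rightarrow> (nat \<Rightarrow> nat) \<Rightarrow> 'a::ab_group_add)"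
  shows "\<exists>a b. (\<forall>l\<in>Lam n. natmul (p ^ m (fst l)) (b l) = 0) \<and> cohomologous2 n m p f (alpha n m p a b)"
proof -
  define c where "c = f (\<lambda>_. 0) (\<lambda>_. 0)"
  define f0 where "f0 = (\<lambda>g h. f g h - c)"
  have cf: "f h k - f (gm g h) k + f g (gm h k) - f g h = 0" if "g \<in> GG" "h \<in> GG" "k \<in> GG" for g h k
    using coc that unfolding cocycle2_def by blast
  have c0: "cocycle2 n m p f0"
    unfolding cocycle2_def f0_def ag6 using cf by blast
  have l0: "\<forall>k\<in>GG. f0 (\<lambda>_. 0) k = 0"
  proof
    fix k assume k: "k \<in> GG"
    have "f (\<lambda>_. 0) k - f (gm (\<lambda>_. 0) (\<lambda>_. 0)) k + f (\<lambda>_. 0) (gm (\<lambda>_. 0) k) - f (\<lambda>_. 0) (\<lambda>_. 0) = 0"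
      using cf[of "\<lambda>_. 0" "\<lambda>_. 0" k] k by simp
    thus "f0 (\<lambda>_. 0) k = 0" using k by (simp add: f0_def c_def gm_z)
  qed
  have r0: "\<forall>g\<in>GG. f0 g (\<lambda>_. 0) = 0"
  proof
    fix g assume g: "g \<in> GG"
    have "f (\<lambda>_. 0) (\<lambda>_. 0) - f (gm g (\<lambda>_. 0)) (\<lambda>_. 0) + f g (gm (\<lambda>_. 0) (\<lambda>_. 0)) - f g (\<lambda>_. 0) = 0"
      using cf[of g "\<lambda>_. 0" "\<lambda>_. 0"] g by simp
    thus "f0 g (\<lambda>_. 0) = 0" using g by (simp add: f0_def c_def gm_z gm_z2)
  qed
  interpret E0: extc n m p f0
    by (unfold_locales) (fact c0, fact l0, fact r0)
  obtain a b where ab: "\<forall>l\<in>Lam n. natmul (p ^ m (fst l)) (b l) = 0"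
    and coh: "cohomologous2 n m p f0 (alpha n m p a b)"
    using E0.part2_norm by blast
  obtain \<psi> where psi: "\<forall>g\<in>GG. \<forall>h\<in>GG. f0 g h - alpha n m p a b g h = \<psi> h - \<psi> (gm g h) + \<psi> g"
    using coh unfolding cohomologous2_def coboundary2_def by blast
  have "cohomologous2 n m p f (alpha n m p a b)"
    unfolding cohomologous2_def coboundary2_def
  proof (intro exI[of _ "\<lambda>s. \<psi> s + c"] ballI)
    fix g h assume "g \<in> GG" "h \<in> GG"
    hence "f0 g h - alpha n m p a b g h = \<psi> h - \<psi> (gm g h) + \<psi> g" using psi by blast
    thus "f g h - alpha n m p a b g h = \<psi> h + c - (\<psi> (gm g h) + c) + (\<psi> g + c)"
      by (simp add: f0_def algebra_simps)
  qed
  thus ?thesis using ab by blast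
qed

end

theorem lemma2p1:
  fixes p n :: nat and m :: "nat \<Rightarrow> nat"
  assumes "prime p"
    and "\<forall>i<n. 1 \<le> m i"
    and "\<forall>i j. i \<le> j \<and> j < n \<longrightarrow> m i \<le> m j"
    and "\<forall>x::'a::{ab_group_add,finite}. \<exists>k. natmul (p ^ k) x = 0"
  shows
    "(\<forall>(a::nat \<Rightarrow> 'a) b. (\<forall>l\<in>Lam n. natmul (p ^ m (fst l)) (b l) = 0)
        \<longrightarrow> cocycle2 n m p (alpha n m p a b))
   \<and> (\<forall>f :: (nat \<Rightarrow> nat) \<Rightarrow> (nat \<Rightarrow> nat) \<Rightarrow> 'a. cocycle2 n m p f \<longrightarrow>
        (\<exists>a b. (\<forall>l\<in>Lam n. natmul (p ^ m (fst l)) (b l) = 0)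
              \<and> cohomologous2 n m p f (alpha n m p a b)))
   \<and> (\<forall>(a::nat \<Rightarrow> 'a) b. (\<forall>l\<in>Lam n. natmul (p ^ m (fst l)) (b l) = 0)
        \<longrightarrow> (coboundary2 n m p (alpha n m p a b) \<longleftrightarrow>
              (\<forall>i<n. \<exists>x. a i = natmul (p ^ m i) x) \<and> (\<forall>l\<in>Lam n. b l = 0)))
   \<and> (\<forall>(a::nat \<Rightarrow> 'a) b a' b'. (\<forall>l\<in>Lam n. natmul (p ^ m (fst l)) (b l) = 0)
        \<and> (\<forall>l\<in>Lam n. natmul (p ^ m (fst l)) (b' l) = 0)
        \<longrightarrow> (cohomologous2 n m p (alpha n m p a b) (alpha n m p a' b') \<longleftrightarrow>
              (\<forall>i<n. \<exists>x. a i - a' i = natmul (p ^ m i) x) \<and> (\<forall>l\<in>Lam n. b l = b' l)))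
   \<and> (\<forall>(a::nat \<Rightarrow> 'a) b a' b'. \<forall>s\<in>grp n m p. \<forall>t\<in>grp n m p.
        alpha n m p (\<lambda>i. a i + a' i) (\<lambda>l. b l + b' l) s t = alpha n m p a b s t + alpha n m p a' b' s t)"
proof -
  have p2: "2 \<le> p" using assms(1) by (rule prime_ge_2_nat)
  interpret S: setting n m p
    using p2 assms(2,3) by unfold_locales
  show ?thesis
    apply (intro conjI)
        apply (intro allI impI, erule S.part1)
       apply (intro allI impI, erule S.part2)
      apply (intro allI impI, rule S.part3)
     apply (intro allI impI, rule S.part4)
    apply (intro allI ballI, rule S.alpha_add)
    done
qed

end
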